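(* Every translation from limit-deterministic Büchi automata to deterministic parity automata produces, in the worst case, for input LDBAs with $n$ states, output automata with $2^{\Omega(n\log n)}$ states.
   Context: A limit-deterministic Büchi automaton (LDBA) is a nondeterministic Büchi automaton $(Q,q_0,\Sigma,\delta,\alpha)$ together with $Q_d\subseteq Q$ such that all accepting transitions are within $Q_d$, the transition relation is deterministic on $Q_d$, and $Q_d$ is closed under successors. A deterministic parity automaton has a deterministic transition function and a coloring of transitions by positive integers; a word is accepted iff the minimal color seen infinitely often on its run is even. A translation maps each LDBA to a DPA recognizing the same language. *)

theory Defs
  imports Complex_Main
begin

text \<open>Omega-words over letters of type 'a are functions nat => 'a.
  States of all automata are natural numbers (any finite state set can be renamed).\<close>

record 'a ldba =
  lstates :: "nat set"
  linit   :: nat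
  lalph   :: "'a set"
  ltrans  :: "nat \<Rightarrow> 'a \<Rightarrow> nat set"
  lacc    :: "(nat \<times> 'a \<times> nat) set"
  ldet    :: "nat set"

definition is_ldba :: "'a ldba \<Rightarrow> bool" where
  "is_ldba A \<longleftrightarrow>
     finite (lstates A) \<and> finite (lalph A) \<and> linit A \<in> lstates A \<and>
     (\<forall>q\<in>lstates A. \<forall>a\<in>lalph A. ltrans A q a \<subseteq> lstates A) \<and>
     lacc A \<subseteq> {(q, a, q'). q \<in> lstates A \<and> a \<in> lalph A \<and> q' \<in> ltrans A q a} \<and>
     ldet A \<subseteq> lstates A \<and>
     (\<forall>(q, a, q') \<in> lacc A. q \<in> ldet A \<and> q' \<in> ldet A) \<and>
     (\<forall>q\<in>ldet A. \<forall>a\<in>lalph A. card (ltrans A q a) \<le> 1) \<and>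
     (\<forall>q\<in>ldet A. \<forall>a\<in>lalph A. ltrans A q a \<subseteq> ldet A)"

definition ldba_run :: "'a ldba \<Rightarrow> (nat \<Rightarrow> 'a) \<Rightarrow> (nat \<Rightarrow> nat) \<Rightarrow> bool" where
  "ldba_run A w r \<longleftrightarrow> r 0 = linit A \<and> (\<forall>i. r (Suc i) \<in> ltrans A (r i) (w i))"

definition ldba_lang :: "'a ldba \<Rightarrow> (nat \<Rightarrow> 'a) set" where
  "ldba_lang A = {w. (\<forall>i. w i \<in> lalph A) \<and>
      (\<exists>r. ldba_run A w r \<and> (\<exists>\<^sub>\<infinity> i. (r i, w i, r (Suc i)) \<in> lacc A))}"

record 'a dpa =
  dstates :: "nat set"
  dinit   :: nat
  dalph   :: "'a set"
  dtrans  :: "nat \<Rightarrow> 'a \<Rightarrow> nat"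
  dcol    :: "nat \<Rightarrow> 'a \<Rightarrow> nat"

definition is_dpa :: "'a dpa \<Rightarrow> bool" where
  "is_dpa D \<longleftrightarrow>
     finite (dstates D) \<and> finite (dalph D) \<and> dinit D \<in> dstates D \<and>
     (\<forall>q\<in>dstates D. \<forall>a\<in>dalph D. dtrans D q a \<in> dstates D \<and> dcol D q a > 0)"

definition dpa_run :: "'a dpa \<Rightarrow> (nat \<Rightarrow> 'a) \<Rightarrow> nat \<Rightarrow> nat" where
  "dpa_run D w = rec_nat (dinit D) (\<lambda>i q. dtrans D q (w i))"

definition dpa_lang :: "'a dpa \<Rightarrow> (nat \<Rightarrow> 'a) set" where
  "dpa_lang D = {w. (\<forall>i. w i \<in> dalph D) \<and>
      even (LEAST k. \<exists>\<^sub>\<infinity> i. dcol D (dpa_run D w i) (w i) = k)}"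

end

theory Submission
  imports Defs "HOL-Library.Nat_Bijection" "HOL-Library.Infinite_Set"
begin

definition mk :: "nat \<Rightarrow> nat" where "mk a = fst (prod_decode a)"
definition kl :: "nat \<Rightarrow> nat set" where "kl a = set_decode (snd (prod_decode a))"
definition lt :: "nat \<Rightarrow> nat set \<Rightarrow> nat" where "lt i J = prod_encode (i, set_encode J)"

lemma mk_lt[simp]: "mk (lt i J) = i" by (simp add: mk_def lt_def)
lemma kl_lt[simp]: "finite J \<Longrightarrow> kl (lt i J) = J" by (simp add: kl_def lt_def)

definition SigI :: "nat set \<Rightarrow> nat set" where
  "SigI I = {lt i J | i J. i \<in> I \<and> J \<subseteq> I}"

definition AI :: "nat set \<Rightarrow> nat \<Rightarrow> nat set" where
  "AI I x = {lt i J | i J. i \<in> I \<and> J \<subseteq> I \<and> x \<notin> J}"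

definition Am :: "nat \<Rightarrow> nat ldba" where
  "Am m = \<lparr> lstates = {0..m}, linit = 0, lalph = SigI {..<m},
     ltrans = (\<lambda>q a. if q = 0 then {0..m} else if q - 1 \<in> kl a then {} else {q}),
     lacc = {(q, a, q) | q a. 1 \<le> q \<and> q \<le> m \<and> a \<in> SigI {..<m} \<and> mk a = q - 1 \<and> q - 1 \<notin> kl a},
     ldet = {1..m} \<rparr>"

lemma finite_SigI: "finite I \<Longrightarrow> finite (SigI I)"
proof -
  assume "finite I"
  have "SigI I = (\<lambda>(i,J). lt i J) ` (I \<times> Pow I)" unfolding SigI_def by auto
  thus ?thesis using \<open>finite I\<close> by simp
qed

lemma is_ldba_Am: "is_ldba (Am m)"
  unfolding is_ldba_def Am_def by (auto simp: finite_SigI card_insert_if)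

lemma SigI_E: "a \<in> SigI I \<Longrightarrow> finite I \<Longrightarrow> mk a \<in> I \<and> kl a \<subseteq> I"
  unfolding SigI_def by (auto simp: finite_subset)

lemma lang_Am: "ldba_lang (Am m) = {w. (\<forall>k. w k \<in> SigI {..<m}) \<and>
   (\<exists>i<m. \<not> (\<exists>\<^sub>\<infinity>k. i \<in> kl (w k)) \<and> (\<exists>\<^sub>\<infinity>k. mk (w k) = i))}"
proof (intro set_eqI iffI)
  fix w assume "w \<in> ldba_lang (Am m)"
  then obtain r where alph: "\<forall>k. w k \<in> SigI {..<m}" and run: "ldba_run (Am m) w r"
    and inf: "\<exists>\<^sub>\<infinity> i. (r i, w i, r (Suc i)) \<in> lacc (Am m)"
    unfolding ldba_lang_def by (auto simp: Am_def)
  from inf obtain k0 where k0: "(r k0, w k0, r (Suc k0)) \<in> lacc (Am m)"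
    by (auto simp: INFM_nat)
  define i where "i = r k0 - 1"
  have rk0: "1 \<le> r k0" "r k0 \<le> m" using k0 by (auto simp: Am_def)
  have stay: "r (k0 + j) = r k0 \<and> i \<notin> kl (w (k0 + j))" for j
  proof (induction j)
    case 0
    then show ?case using k0 by (auto simp: Am_def i_def)
  next
    case (Suc j)
    have "r (Suc (k0 + j)) \<in> ltrans (Am m) (r (k0+j)) (w (k0+j))"
      using run unfolding ldba_run_def by blast
    hence e: "r (k0 + Suc j) = r k0" using Suc rk0 by (auto simp: Am_def i_def split: if_splits)
    have "r (Suc (k0 + Suc j)) \<in> ltrans (Am m) (r (k0+Suc j)) (w (k0+Suc j))"
      using run unfolding ldba_run_def by blast
    hence "i \<notin> kl (w (k0 + Suc j))" using e rk0 by (auto simp: Am_def i_def split: if_splits)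
    with e show ?case by simp
  qed
  have "\<not> (\<exists>\<^sub>\<infinity>k. i \<in> kl (w k))"
  proof
    assume "\<exists>\<^sub>\<infinity>k. i \<in> kl (w k)"
    then obtain k where "k \<ge> k0" "i \<in> kl (w k)" by (auto simp: INFM_nat_le)
    with stay[of "k - k0"] show False by simp
  qed
  moreover have "\<exists>\<^sub>\<infinity>k. mk (w k) = i"
    unfolding INFM_nat_le
  proof
    fix n
    obtain k where "k \<ge> max n k0" "(r k, w k, r (Suc k)) \<in> lacc (Am m)"
      using inf unfolding INFM_nat_le by blast
    moreover have "r k = r k0" using stay[of "k - k0"] \<open>k \<ge> max n k0\<close> by simp
    ultimately show "\<exists>k\<ge>n. mk (w k) = i" by (auto simp: Am_def i_def)
  qed
  moreover have "i < m" using rk0 by (simp add: i_def)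
  ultimately show "w \<in> {w. (\<forall>k. w k \<in> SigI {..<m}) \<and>
   (\<exists>i<m. \<not> (\<exists>\<^sub>\<infinity>k. i \<in> kl (w k)) \<and> (\<exists>\<^sub>\<infinity>k. mk (w k) = i))}" using alph by blast
next
  fix w :: "nat \<Rightarrow> nat" assume "w \<in> {w. (\<forall>k. w k \<in> SigI {..<m}) \<and>
   (\<exists>i<m. \<not> (\<exists>\<^sub>\<infinity>k. i \<in> kl (w k)) \<and> (\<exists>\<^sub>\<infinity>k. mk (w k) = i))}"
  then obtain i where alph: "\<forall>k. w k \<in> SigI {..<m}" and im: "i < m"
    and nk: "\<not> (\<exists>\<^sub>\<infinity>k. i \<in> kl (w k))" and mi: "\<exists>\<^sub>\<infinity>k. mk (w k) = i" by blast
  from nk obtain N where N: "\<forall>k>N. i \<notin> kl (w k)" by (auto simp: INFM_nat)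
  define r where "r k = (if k \<le> N then 0 else Suc i)" for k
  have "ldba_run (Am m) w r" unfolding ldba_run_def
    using N im by (auto simp: r_def Am_def)
  moreover have "\<exists>\<^sub>\<infinity> k. (r k, w k, r (Suc k)) \<in> lacc (Am m)"
    unfolding INFM_nat
  proof
    fix n
    obtain k where "k > max n N" "mk (w k) = i" using mi unfolding INFM_nat by blast
    thus "\<exists>k>n. (r k, w k, r (Suc k)) \<in> lacc (Am m)"
      using N im alph by (auto simp: r_def Am_def intro!: exI[of _ k])
  qed
  ultimately show "w \<in> ldba_lang (Am m)" using alph unfolding ldba_lang_def by (auto simp: Am_def)
qed



definition per :: "nat list \<Rightarrow> nat list \<Rightarrow> nat \<Rightarrow> nat" where
  "per u v k = (if k < length u then u!k else v!((k - length u) mod length v))"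

lemma per_shift: "per u v (length u + j) = v ! (j mod length v)"
  by (simp add: per_def)

lemma per_inf:
  fixes f :: "nat \<Rightarrow> 'a" and L :: nat
  assumes "0 < p" "\<forall>j. f (L + j) = g (j mod p)"
  shows "(\<exists>\<^sub>\<infinity>k. P (f k)) \<longleftrightarrow> (\<exists>j<p. P (g j))"
proof
  assume "\<exists>\<^sub>\<infinity>k. P (f k)"
  then obtain k where "k \<ge> L" "P (f k)" unfolding INFM_nat_le by blast
  moreover have "f k = g ((k - L) mod p)" using assms(2)[rule_format, of "k - L"] \<open>k \<ge> L\<close> by simp
  ultimately show "\<exists>j<p. P (g j)" using assms(1) by (metis mod_less_divisor)
next
  assume "\<exists>j<p. P (g j)"
  then obtain j where j: "j < p" "P (g j)" by blast
  show "\<exists>\<^sub>\<infinity>k. P (f k)" unfolding INFM_nat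
  proof
    fix n
    have "(j + p * (n+1)) mod p = j" using j(1) by (simp only: mod_mult_self2 mod_less)
    hence "f (L + (j + p * (n+1))) = g j" using assms(2) by metis
    moreover have "p * (n+1) \<ge> 1 * (n + 1)" using assms(1) by (intro mult_le_mono1) simp
    hence "L + (j + p * (n+1)) > n" by simp
    ultimately show "\<exists>k>n. P (f k)" using j by metis
  qed
qed

lemma per_lang:
  assumes "v \<noteq> []" "set u \<subseteq> SigI {..<m}" "set v \<subseteq> SigI {..<m}"
  shows "per u v \<in> ldba_lang (Am m) \<longleftrightarrow> (\<exists>i<m. (\<exists>a\<in>set v. mk a = i) \<and> (\<forall>a\<in>set v. i \<notin> kl a))"
proof -
  have alph: "\<forall>k. per u v k \<in> SigI {..<m}"
    using assms by (auto simp: per_def)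
  have sh: "\<forall>j. per u v (length u + j) = v ! (j mod length v)" by (simp add: per_shift)
  have p: "0 < length v" using assms by simp
  have e1: "(\<exists>\<^sub>\<infinity>k. i \<in> kl (per u v k)) \<longleftrightarrow> (\<exists>a\<in>set v. i \<in> kl a)" for i
    using per_inf[OF p sh, of "\<lambda>a. i \<in> kl a"] by (metis in_set_conv_nth)
  have e2: "(\<exists>\<^sub>\<infinity>k. mk (per u v k) = i) \<longleftrightarrow> (\<exists>a\<in>set v. mk a = i)" for i
    using per_inf[OF p sh, of "\<lambda>a. mk a = i"] by (metis in_set_conv_nth)
  have "per u v \<in> ldba_lang (Am m) \<longleftrightarrow> (\<exists>i<m. \<not> (\<exists>\<^sub>\<infinity>k. i \<in> kl (per u v k)) \<and> (\<exists>\<^sub>\<infinity>k. mk (per u v k) = i))"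
    unfolding lang_Am using alph by blast
  also have "\<dots> \<longleftrightarrow> (\<exists>i<m. (\<exists>a\<in>set v. mk a = i) \<and> (\<forall>a\<in>set v. i \<notin> kl a))"
    unfolding e1 e2 by blast
  finally show ?thesis .
qed

fun steps :: "'a dpa \<Rightarrow> nat \<Rightarrow> 'a list \<Rightarrow> nat" where
  "steps D p [] = p"
| "steps D p (a # xs) = steps D (dtrans D p a) xs"

lemma steps_append[simp]: "steps D p (xs @ ys) = steps D (steps D p xs) ys"
  by (induction xs arbitrary: p) auto

lemma run_steps: "dpa_run D w k = steps D (dinit D) (map w [0..<k])"
  by (induction k) (auto simp: dpa_run_def)

definition cols :: "'a dpa \<Rightarrow> nat \<Rightarrow> 'a list \<Rightarrow> nat set" where
  "cols D z v = {dcol D (steps D z (take j v)) (v!j) | j. j < length v}"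

lemma cols_append:
  assumes "steps D z x = z"
  shows "cols D z (x @ y) = cols D z x \<union> cols D z y"
proof (intro set_eqI iffI)
  fix c assume "c \<in> cols D z (x @ y)"
  then obtain j where j: "j < length (x@y)" "c = dcol D (steps D z (take j (x@y))) ((x@y)!j)"
    unfolding cols_def by blast
  show "c \<in> cols D z x \<union> cols D z y"
  proof (cases "j < length x")
    case True
    then show ?thesis using j unfolding cols_def by (auto simp: nth_append)
  next
    case False
    then have "c = dcol D (steps D z (take (j - length x) y)) (y!(j - length x))"
      using j assms by (simp add: nth_append)
    moreover have "j - length x < length y" using j False by simp
    ultimately show ?thesis unfolding cols_def by blast
  qed
next
  fix c assume "c \<in> cols D z x \<union> cols D z y"
  then show "c \<in> cols D z (x @ y)"
  proof
    assume "c \<in> cols D z x"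
    then obtain j where j: "j < length x" "c = dcol D (steps D z (take j x)) (x!j)"
      unfolding cols_def by blast
    hence "c = dcol D (steps D z (take j (x@y))) ((x@y)!j)" by (simp add: nth_append)
    moreover have "j < length (x@y)" using j by simp
    ultimately show ?thesis unfolding cols_def by blast
  next
    assume "c \<in> cols D z y"
    then obtain j where j: "j < length y" "c = dcol D (steps D z (take j y)) (y!j)"
      unfolding cols_def by blast
    hence "c = dcol D (steps D z (take (length x + j) (x@y))) ((x@y)!(length x + j))"
      using assms by (simp add: nth_append)
    moreover have "length x + j < length (x@y)" using j by simp
    ultimately show ?thesis unfolding cols_def by blast
  qed
qed

lemma dpa_per:
  assumes "v \<noteq> []" "steps D (dinit D) u = z" "steps D z v = z" "\<forall>k. per u v k \<in> dalph D"
  shows "per u v \<in> dpa_lang D \<longleftrightarrow> even (Min (cols D z v))"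
proof -
  let ?w = "per u v"
  let ?L = "length u" and ?p = "length v"
  have p: "0 < ?p" using assms by simp
  have mapu: "map ?w [0..<?L] = u" by (rule nth_equalityI) (auto simp: per_def)
  have runL: "dpa_run D ?w ?L = z" using assms(2) by (simp add: run_steps mapu)
  have run: "dpa_run D ?w (?L + j) = steps D z (take (j mod ?p) v)" for j
  proof (induction j)
    case 0 then show ?case using runL by simp
  next
    case (Suc j)
    have "dpa_run D ?w (?L + Suc j) = dtrans D (dpa_run D ?w (?L + j)) (?w (?L + j))"
      by (simp add: dpa_run_def)
    also have "\<dots> = steps D z (take (j mod ?p) v @ [v ! (j mod ?p)])"
      using Suc by (simp add: per_shift)
    also have "\<dots> = steps D z (take (Suc (j mod ?p)) v)"
      using p by (simp add: take_Suc_conv_app_nth)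
    also have "\<dots> = steps D z (take (Suc j mod ?p) v)"
    proof (cases "Suc (j mod ?p) = ?p")
      case True
      then have "Suc j mod ?p = 0" by (metis mod_Suc)
      then show ?thesis using True assms(3) by simp
    next
      case False
      then have "Suc j mod ?p = Suc (j mod ?p)" by (metis mod_Suc)
      then show ?thesis by simp
    qed
    finally show ?case .
  qed
  define g where "g j = dcol D (steps D z (take j v)) (v!j)" for j
  have col: "\<forall>j. dcol D (dpa_run D ?w (?L + j)) (?w (?L + j)) = g (j mod ?p)"
    by (simp add: run per_shift g_def)
  have eq: "{c. \<exists>\<^sub>\<infinity>i. dcol D (dpa_run D ?w i) (?w i) = c} = cols D z v"
  proof (intro set_eqI iffI)
    fix c assume "c \<in> {c. \<exists>\<^sub>\<infinity>i. dcol D (dpa_run D ?w i) (?w i) = c}"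
    then have "\<exists>j<?p. g j = c" using per_inf[OF p col, of "\<lambda>x. x = c"] by simp
    then show "c \<in> cols D z v" unfolding cols_def g_def by auto
  next
    fix c assume "c \<in> cols D z v"
    then have "\<exists>j<?p. g j = c" unfolding cols_def g_def by auto
    then show "c \<in> {c. \<exists>\<^sub>\<infinity>i. dcol D (dpa_run D ?w i) (?w i) = c}"
      using per_inf[OF p col, of "\<lambda>x. x = c"] by simp
  qed
  have fin: "finite (cols D z v)" unfolding cols_def by simp
  have ne: "cols D z v \<noteq> {}" using p unfolding cols_def by auto
  have "(LEAST c. \<exists>\<^sub>\<infinity>i. dcol D (dpa_run D ?w i) (?w i) = c) = Min (cols D z v)"
    using Least_Min[of "\<lambda>c. \<exists>\<^sub>\<infinity>i. dcol D (dpa_run D ?w i) (?w i) = c"] eq fin ne by auto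
  then show ?thesis using assms(4) unfolding dpa_lang_def by simp
qed



lemma AI_E: "a \<in> AI I x \<Longrightarrow> finite I \<Longrightarrow> mk a \<in> I \<and> kl a \<subseteq> I \<and> x \<notin> kl a"
proof -
  assume "a \<in> AI I x" "finite I"
  then obtain i J where "a = lt i J" "i \<in> I" "J \<subseteq> I" "x \<notin> J" unfolding AI_def by blast
  moreover have "finite J" using \<open>J \<subseteq> I\<close> \<open>finite I\<close> finite_subset by blast
  ultimately show ?thesis by simp
qed

lemma SigI_I: "i \<in> I \<Longrightarrow> J \<subseteq> I \<Longrightarrow> lt i J \<in> SigI I"
  unfolding SigI_def by (rule CollectI, intro exI conjI, rule refl, assumption+)
lemma AI_I: "i \<in> I \<Longrightarrow> J \<subseteq> I \<Longrightarrow> x \<notin> J \<Longrightarrow> lt i J \<in> AI I x"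
  unfolding AI_def by (rule CollectI, intro exI conjI, rule refl, assumption+)
lemma SigI_D: "a \<in> SigI I \<Longrightarrow> \<exists>i J. a = lt i J \<and> i \<in> I \<and> J \<subseteq> I"
  unfolding SigI_def by (drule CollectD) assumption
lemma AI_D: "a \<in> AI I x \<Longrightarrow> \<exists>i J. a = lt i J \<and> i \<in> I \<and> J \<subseteq> I \<and> x \<notin> J"
  unfolding AI_def by (drule CollectD) assumption

lemma AI_sub: "AI I x \<subseteq> SigI I"
proof
  fix a assume "a \<in> AI I x"
  then obtain i J where "a = lt i J" "i \<in> I" "J \<subseteq> I" using AI_D by blast
  thus "a \<in> SigI I" using SigI_I by simp
qed
lemma SigI_mono: "I \<subseteq> I' \<Longrightarrow> SigI I \<subseteq> SigI I'"
proof
  fix a assume "I \<subseteq> I'" "a \<in> SigI I"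
  then obtain i J where "a = lt i J" "i \<in> I" "J \<subseteq> I" using SigI_D by blast
  thus "a \<in> SigI I'" using SigI_I[of i I' J] \<open>I \<subseteq> I'\<close> by auto
qed
lemma SigI_AI: "SigI (I - {x}) \<subseteq> AI I x"
proof
  fix a assume "a \<in> SigI (I - {x})"
  then obtain i J where "a = lt i J" "i \<in> I - {x}" "J \<subseteq> I - {x}" using SigI_D by blast
  thus "a \<in> AI I x" using AI_I[of i I J x] by auto
qed

definition R :: "'a dpa \<Rightarrow> 'a set \<Rightarrow> nat \<Rightarrow> nat set" where
  "R D S p = {steps D p xs | xs. set xs \<subseteq> S}"

lemma R_I: "set xs \<subseteq> S \<Longrightarrow> steps D p xs = q \<Longrightarrow> q \<in> R D S p"
  unfolding R_def by (rule CollectI, intro exI conjI, rule sym, assumption+)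

lemma R_self: "p \<in> R D S p"
  by (rule R_I[of "[]"]) auto

lemma R_trans: "q \<in> R D S p \<Longrightarrow> q' \<in> R D S q \<Longrightarrow> q' \<in> R D S p"
proof -
  assume "q \<in> R D S p" "q' \<in> R D S q"
  then obtain xs ys where "set xs \<subseteq> S" "steps D p xs = q" "set ys \<subseteq> S" "steps D q ys = q'"
    unfolding R_def by blast
  hence "set (xs @ ys) \<subseteq> S" "steps D p (xs @ ys) = q'" by auto
  thus ?thesis by (rule R_I)
qed

lemma R_D: "q \<in> R D S p \<Longrightarrow> \<exists>xs. q = steps D p xs \<and> set xs \<subseteq> S"
  unfolding R_def by (drule CollectD) assumption

lemma R_mono: "S \<subseteq> S' \<Longrightarrow> R D S p \<subseteq> R D S' p"
proof
  fix q assume "S \<subseteq> S'" "q \<in> R D S p"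
  then obtain xs where "q = steps D p xs" "set xs \<subseteq> S" using R_D by blast
  thus "q \<in> R D S' p" using R_I[of xs S' D p q] \<open>S \<subseteq> S'\<close> by auto
qed

lemma steps_in: "is_dpa D \<Longrightarrow> p \<in> dstates D \<Longrightarrow> set xs \<subseteq> dalph D \<Longrightarrow> steps D p xs \<in> dstates D"
  by (induction xs arbitrary: p) (auto simp: is_dpa_def)

lemma R_sub: "is_dpa D \<Longrightarrow> p \<in> dstates D \<Longrightarrow> S \<subseteq> dalph D \<Longrightarrow> R D S p \<subseteq> dstates D"
proof
  fix q assume a: "is_dpa D" "p \<in> dstates D" "S \<subseteq> dalph D" "q \<in> R D S p"
  then obtain xs where "set xs \<subseteq> S" "steps D p xs = q" unfolding R_def by blast
  thus "q \<in> dstates D" using steps_in[OF a(1,2), of xs] a(3) by auto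
qed

lemma R_fin: "is_dpa D \<Longrightarrow> p \<in> dstates D \<Longrightarrow> S \<subseteq> dalph D \<Longrightarrow> finite (R D S p)"
proof -
  assume a: "is_dpa D" "p \<in> dstates D" "S \<subseteq> dalph D"
  have "finite (dstates D)" using a(1) unfolding is_dpa_def by simp
  thus ?thesis using R_sub[OF a] finite_subset by auto
qed

lemma bottom_exists:
  assumes "is_dpa D" "p \<in> dstates D" "S \<subseteq> dalph D"
  shows "\<exists>q\<in>R D S p. \<forall>q'\<in>R D S q. q \<in> R D S q'"
proof -
  obtain q where q: "q \<in> R D S p" and qmin: "\<forall>q''\<in>R D S p. card (R D S q) \<le> card (R D S q'')"
    using ex_has_least_nat[of "\<lambda>q. q \<in> R D S p" p "\<lambda>q. card (R D S q)"] R_self by blast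
  have qs: "q \<in> dstates D" using q R_sub assms by blast
  show ?thesis
  proof (intro bexI[OF _ q] ballI)
    fix q' assume q': "q' \<in> R D S q"
    have q's: "q' \<in> dstates D" using q' R_sub assms qs by blast
    have sub: "R D S q' \<subseteq> R D S q" using R_trans q' by blast
    have "card (R D S q) \<le> card (R D S q')" using qmin R_trans[OF q q'] by blast
    hence "R D S q' = R D S q" using card_seteq[OF R_fin[OF assms(1) qs assms(3)] sub] by blast
    thus "q \<in> R D S q'" using R_self by blast
  qed
qed

lemma loop_exists:
  assumes bot: "\<forall>q'\<in>R D S b. b \<in> R D S q'" and z: "z \<in> R D S b" and a: "a \<in> S"
  shows "\<exists>x. set x \<subseteq> S \<and> a \<in> set x \<and> steps D z x = z"
proof -
  have "steps D z [a] \<in> R D S z" unfolding R_def using a by (auto intro!: exI[of _ "[a]"])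
  hence "steps D z [a] \<in> R D S b" using R_trans z by blast
  hence "b \<in> R D S (steps D z [a])" using bot by blast
  then obtain xs1 where x1: "set xs1 \<subseteq> S" "steps D (steps D z [a]) xs1 = b" unfolding R_def by blast
  obtain xs2 where x2: "set xs2 \<subseteq> S" "steps D b xs2 = z" using z unfolding R_def by blast
  show ?thesis using x1 x2 a
    by (intro exI[of _ "a # xs1 @ xs2"]) auto
qed

locale setting =
  fixes D :: "nat dpa" and m :: nat
  assumes isd: "is_dpa D" and leq: "dpa_lang D = ldba_lang (Am m)" and mpos: "0 < m"
begin

definition reach :: "nat \<Rightarrow> bool" where
  "reach q \<longleftrightarrow> (\<exists>u. set u \<subseteq> SigI {..<m} \<and> steps D (dinit D) u = q)"

lemma alph_sub: "SigI {..<m} \<subseteq> dalph D"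
proof
  fix a assume a: "a \<in> SigI {..<m}"
  have l0: "lt 0 {} \<in> SigI {..<m}" using mpos unfolding SigI_def by blast
  have "(\<exists>i<m. (\<exists>a\<in>set [lt 0 {}]. mk a = i) \<and> (\<forall>a\<in>set [lt 0 {}]. i \<notin> kl a))"
    using mpos by (intro exI[of _ 0]) simp
  hence "per [a] [lt 0 {}] \<in> ldba_lang (Am m)"
    using per_lang[of "[lt 0 {}]" "[a]" m] a l0 by simp
  hence "per [a] [lt 0 {}] \<in> dpa_lang D" using leq by simp
  hence "per [a] [lt 0 {}] 0 \<in> dalph D" unfolding dpa_lang_def by blast
  thus "a \<in> dalph D" by (simp add: per_def)
qed

lemma reach_in: "reach q \<Longrightarrow> q \<in> dstates D"
proof -
  assume "reach q"
  then obtain u where u: "set u \<subseteq> SigI {..<m}" "steps D (dinit D) u = q" unfolding reach_def by blast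
  have "dinit D \<in> dstates D" using isd unfolding is_dpa_def by blast
  thus ?thesis using steps_in[OF isd _ order.trans[OF u(1) alph_sub]] u(2) by blast
qed

lemma reach_R: "reach p \<Longrightarrow> S \<subseteq> SigI {..<m} \<Longrightarrow> q \<in> R D S p \<Longrightarrow> reach q"
proof -
  assume "reach p" "S \<subseteq> SigI {..<m}" "q \<in> R D S p"
  then obtain xs ys where "set xs \<subseteq> SigI {..<m}" "steps D (dinit D) xs = p" "set ys \<subseteq> S" "steps D p ys = q"
    unfolding R_def reach_def by blast
  hence "set (xs @ ys) \<subseteq> SigI {..<m}" "steps D (dinit D) (xs @ ys) = q" using \<open>S \<subseteq> SigI {..<m}\<close> by auto
  thus ?thesis unfolding reach_def by blast
qed

lemma per_alph: "v \<noteq> [] \<Longrightarrow> set u \<subseteq> SigI {..<m} \<Longrightarrow> set v \<subseteq> SigI {..<m} \<Longrightarrow> \<forall>k. per u v k \<in> dalph D"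
proof
  fix k assume "v \<noteq> []" "set u \<subseteq> SigI {..<m}" "set v \<subseteq> SigI {..<m}"
  hence "per u v k \<in> SigI {..<m}" by (auto simp: per_def)
  thus "per u v k \<in> dalph D" using alph_sub by blast
qed

lemma verdict:
  assumes "reach z" "x \<noteq> []" "set x \<subseteq> SigI {..<m}" "steps D z x = z"
  shows "even (Min (cols D z x)) \<longleftrightarrow> (\<exists>i<m. (\<exists>a\<in>set x. mk a = i) \<and> (\<forall>a\<in>set x. i \<notin> kl a))"
proof -
  obtain u where u: "set u \<subseteq> SigI {..<m}" "steps D (dinit D) u = z" using assms(1) unfolding reach_def by blast
  have "even (Min (cols D z x)) \<longleftrightarrow> per u x \<in> dpa_lang D"
    using dpa_per[OF assms(2) u(2) assms(4) per_alph[OF assms(2) u(1) assms(3)]] by simp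
  also have "\<dots> \<longleftrightarrow> per u x \<in> ldba_lang (Am m)" using leq by simp
  also have "\<dots> \<longleftrightarrow> (\<exists>i<m. (\<exists>a\<in>set x. mk a = i) \<and> (\<forall>a\<in>set x. i \<notin> kl a))"
    using per_lang[OF assms(2) u(1) assms(3)] .
  finally show ?thesis .
qed

lemma cols_ne: "x \<noteq> [] \<Longrightarrow> cols D z x \<noteq> {}" unfolding cols_def by auto
lemma cols_fin: "finite (cols D z x)" unfolding cols_def by simp

lemma no_share:
  assumes I: "finite I" "I \<subseteq> {..<m}" and ij: "i \<in> I" "j \<in> I" "i \<noteq> j" and z: "reach z"
    and x: "set x \<subseteq> AI I i" "lt i (I - {i}) \<in> set x" "steps D z x = z"
    and y: "set y \<subseteq> AI I j" "lt j (I - {j}) \<in> set y" "steps D z y = z"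
  shows False
proof -
  have SI: "SigI I \<subseteq> SigI {..<m}" using SigI_mono[OF I(2)] .
  have xs: "set x \<subseteq> SigI {..<m}" using x(1) AI_sub SI by blast
  have ys: "set y \<subseteq> SigI {..<m}" using y(1) AI_sub SI by blast
  have xne: "x \<noteq> []" using x(2) by auto
  have yne: "y \<noteq> []" using y(2) by auto
  have fi: "finite (I - {i})" "finite (I - {j})" using I by auto
  have "i < m" using ij I(2) by auto
  moreover have "\<forall>a\<in>set x. i \<notin> kl a" using x(1) AI_E[OF _ I(1)] by blast
  moreover have "mk (lt i (I - {i})) = i" by simp
  ultimately have ex: "even (Min (cols D z x))"
    using verdict[OF z xne xs x(3)] x(2) by blast
  have "j < m" using ij I(2) by auto
  moreover have "\<forall>a\<in>set y. j \<notin> kl a" using y(1) AI_E[OF _ I(1)] by blast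
  moreover have "mk (lt j (I - {j})) = j" by simp
  ultimately have ey: "even (Min (cols D z y))"
    using verdict[OF z yne ys y(3)] y(2) by blast
  have cu: "cols D z (x @ y) = cols D z x \<union> cols D z y" using cols_append[OF x(3)] .
  have "Min (cols D z (x @ y)) = min (Min (cols D z x)) (Min (cols D z y))"
    unfolding cu using Min_Un[OF cols_fin cols_ne[OF xne] cols_fin cols_ne[OF yne]] .
  hence "even (Min (cols D z (x @ y)))" using ex ey by (simp add: min_def)
  moreover have "steps D z (x @ y) = z" using x(3) y(3) by simp
  ultimately obtain i' where i': "i' < m" "\<exists>a\<in>set (x @ y). mk a = i'" "\<forall>a\<in>set (x@y). i' \<notin> kl a"
    using verdict[of z "x @ y"] z xne xs ys by auto
  obtain a where a: "a \<in> set (x @ y)" "mk a = i'" using i'(2) by blast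
  have "a \<in> AI I i \<or> a \<in> AI I j" using a(1) x(1) y(1) by auto
  hence "i' \<in> I" using a(2) AI_E[OF _ I(1)] by blast
  show False
  proof (cases "i' = i")
    case True
    then have "i' \<in> kl (lt j (I - {j}))" using fi ij \<open>i' \<in> I\<close> by simp
    then show False using i'(3) y(2) by auto
  next
    case False
    then have "i' \<in> kl (lt i (I - {i}))" using fi ij \<open>i' \<in> I\<close> by simp
    then show False using i'(3) x(2) by auto
  qed
qed

end



context setting
begin

lemma SigI_dalph: "I \<subseteq> {..<m} \<Longrightarrow> SigI I \<subseteq> dalph D"
  using SigI_mono alph_sub by blast

lemma claim: "\<forall>I p. finite I \<longrightarrow> I \<subseteq> {..<m} \<longrightarrow> card I = k \<longrightarrow> reach p \<longrightarrow> fact k \<le> card (R D (SigI I) p)"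
proof (induction k)
  case 0
  show ?case
  proof (intro allI impI)
    fix I p assume a: "finite I" "I \<subseteq> {..<m}" "card I = 0" "reach p"
    have "finite (R D (SigI I) p)" using R_fin[OF isd reach_in[OF a(4)] SigI_dalph[OF a(2)]] .
    hence "card (R D (SigI I) p) \<noteq> 0" using R_self[of p D "SigI I"] by auto
    thus "fact 0 \<le> card (R D (SigI I) p)" by simp
  qed
next
  case (Suc k)
  show ?case
  proof (intro allI impI)
    fix I p assume a: "finite I" "I \<subseteq> {..<m}" "card I = Suc k" "reach p"
    have ps: "p \<in> dstates D" using reach_in[OF a(4)] .
    have AIs: "AI I i \<subseteq> SigI {..<m}" for i using AI_sub SigI_mono[OF a(2)] by blast
    have AId: "AI I i \<subseteq> dalph D" for i using AIs alph_sub by blast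
    have "\<forall>i\<in>I. \<exists>b. b \<in> R D (AI I i) p \<and> (\<forall>q'\<in>R D (AI I i) b. b \<in> R D (AI I i) q')"
      using bottom_exists[OF isd ps AId] by blast
    from bchoice[OF this] obtain b where b: "\<forall>i\<in>I. b i \<in> R D (AI I i) p \<and> (\<forall>q'\<in>R D (AI I i) (b i). b i \<in> R D (AI I i) q')"
      by blast
    define B where "B i = R D (AI I i) (b i)" for i
    have reachb: "reach (b i)" if "i \<in> I" for i using reach_R[OF a(4) AIs] b that by blast
    have bs: "b i \<in> dstates D" if "i \<in> I" for i using reach_in reachb that by blast
    have finB: "finite (B i)" if "i \<in> I" for i unfolding B_def using R_fin[OF isd bs[OF that] AId] .
    have Bsub: "B i \<subseteq> R D (SigI I) p" if "i \<in> I" for i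
    proof
      fix q assume "q \<in> B i"
      hence "q \<in> R D (AI I i) p" using R_trans b that unfolding B_def by blast
      thus "q \<in> R D (SigI I) p" using R_mono[OF AI_sub] by blast
    qed
    have Bbig: "fact k \<le> card (B i)" if "i \<in> I" for i
    proof -
      have "finite (I - {i})" "I - {i} \<subseteq> {..<m}" "card (I - {i}) = k" using a that by auto
      hence "fact k \<le> card (R D (SigI (I - {i})) (b i))" using Suc.IH reachb[OF that] by blast
      also have "\<dots> \<le> card (B i)" unfolding B_def using card_mono[OF finB[OF that, unfolded B_def] R_mono[OF SigI_AI]] .
      finally show ?thesis .
    qed
    have disj: "B i \<inter> B j = {}" if ij: "i \<in> I" "j \<in> I" "i \<noteq> j" for i j
    proof (rule ccontr)
      assume "B i \<inter> B j \<noteq> {}"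
      then obtain z where z: "z \<in> B i" "z \<in> B j" by blast
      have rz: "reach z" using reach_R[OF reachb[OF that(1)] AIs] z(1) unfolding B_def by blast
      have ai: "lt i (I - {i}) \<in> AI I i" using AI_I[of i I "I - {i}" i] that by blast
      have aj: "lt j (I - {j}) \<in> AI I j" using AI_I[of j I "I - {j}" j] that by blast
      obtain x where x: "set x \<subseteq> AI I i" "lt i (I - {i}) \<in> set x" "steps D z x = z"
        using loop_exists[of D "AI I i" "b i" z, OF _ _ ai] b ij z(1) unfolding B_def by blast
      obtain y where y: "set y \<subseteq> AI I j" "lt j (I - {j}) \<in> set y" "steps D z y = z"
        using loop_exists[of D "AI I j" "b j" z, OF _ _ aj] b ij z(2) unfolding B_def by blast
      show False using no_share[OF a(1,2) ij rz x y] .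
    qed
    have "fact (Suc k) = card I * fact k" using a(3) by simp
    also have "\<dots> = (\<Sum>i\<in>I. fact k)" by simp
    also have "\<dots> \<le> (\<Sum>i\<in>I. card (B i))" using Bbig by (intro sum_mono) auto
    also have "\<dots> = card (\<Union>i\<in>I. B i)"
      using card_UN_disjoint[OF a(1), of B] finB disj by auto
    also have "\<dots> \<le> card (R D (SigI I) p)"
      using Bsub R_fin[OF isd ps SigI_dalph[OF a(2)]] by (intro card_mono) auto
    finally show "fact (Suc k) \<le> card (R D (SigI I) p)" .
  qed
qed

lemma bound: "fact m \<le> card (dstates D)"
proof -
  have r0: "reach (dinit D)" unfolding reach_def by (intro exI[of _ "[]"]) simp
  have "fact m \<le> card (R D (SigI {..<m}) (dinit D))" using claim[of m] r0 by simp
  also have "\<dots> \<le> card (dstates D)"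
    using R_sub[OF isd reach_in[OF r0] alph_sub] isd unfolding is_dpa_def by (intro card_mono) auto
  finally show ?thesis .
qed

end



lemma pow_fact: "k ^ j * fact k \<le> (fact (k + j) :: nat)"
proof (induction j)
  case 0 then show ?case by simp
next
  case (Suc j)
  have "k ^ Suc j * fact k = k * (k ^ j * fact k)" by simp
  also have "\<dots> \<le> (k + Suc j) * fact (k + j)" using Suc by (intro mult_mono) auto
  also have "\<dots> = fact (k + Suc j)" by simp
  finally show ?case .
qed

lemma kk_fact: "k ^ k \<le> (fact (2 * k) :: nat)"
proof -
  have "k ^ k \<le> k ^ k * fact k" by simp
  also have "\<dots> \<le> fact (k + k)" by (rule pow_fact)
  finally show ?thesis by (simp add: mult_2)
qed

lemma real_bound:
  fixes n k :: nat
  assumes n: "n \<ge> 16" and k: "k = (n - 1) div 2"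
  shows "2 powr (1/8 * real n * log 2 (real n)) \<le> real (k ^ k)"
proof -
  have k4: "real n / 4 \<le> real k" using n k by linarith
  have kpos: "real k > 0" using k4 n by linarith
  have l16: "log 2 (real n) \<ge> 4"
  proof -
    have "log 2 (real n) \<ge> log 2 16" using n by simp
    moreover have "log 2 (16::real) = 4"
    proof -
      have "(16::real) = 2 ^ 4" by simp
      hence "log 2 (16::real) = log 2 (2 ^ 4)" by simp
      also have "\<dots> = 4 * log 2 2" by (subst log_nat_power) auto
      also have "\<dots> = 4" by simp
      finally show ?thesis .
    qed
    ultimately show ?thesis by linarith
  qed
  have lk: "log 2 (real k) \<ge> log 2 (real n) - 2"
  proof -
    have "log 2 (real k) \<ge> log 2 (real n / 4)" using k4 n by simp
    moreover have "log 2 (4::real) = 2"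
    proof -
      have "log 2 (4::real) = log 2 (2 ^ 2)" by simp
      also have "\<dots> = 2 * log 2 2" by (subst log_nat_power) auto
      finally show ?thesis by simp
    qed
    moreover have "log 2 (real n / 4) = log 2 (real n) - log 2 4"
      using n by (simp add: log_divide)
    ultimately show ?thesis by linarith
  qed
  have "1/8 * real n * log 2 (real n) = (real n / 4) * (log 2 (real n) / 2)" by simp
  also have "\<dots> \<le> real k * log 2 (real k)"
    using k4 lk l16 n by (intro mult_mono) auto
  finally have e: "1/8 * real n * log 2 (real n) \<le> real k * log 2 (real k)" .
  have "2 powr (1/8 * real n * log 2 (real n)) \<le> 2 powr (real k * log 2 (real k))"
    using e by simp
  also have "\<dots> = (2 powr log 2 (real k)) powr real k"
    by (simp add: powr_powr mult.commute)
  also have "\<dots> = real k powr real k" using kpos by simp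
  also have "\<dots> = real (k ^ k)" using kpos by (simp add: powr_realpow)
  finally show ?thesis .
qed

theorem mainTheorem6:
  fixes T :: "nat ldba \<Rightarrow> nat dpa"
  assumes "\<forall>A. is_ldba A \<longrightarrow> is_dpa (T A) \<and> dpa_lang (T A) = ldba_lang A"
  shows "\<exists>c>0. \<exists>N. \<forall>n\<ge>N. \<exists>A. is_ldba A \<and> card (lstates A) = n \<and>
           real (card (dstates (T A))) \<ge> 2 powr (c * real n * log 2 (real n))"
proof (intro exI[of _ "1/8"] conjI exI[of _ "16"] allI impI)
  show "(0::real) < 1/8" by simp
  fix n :: nat assume n: "16 \<le> n"
  define m where "m = n - 1"
  define k where "k = (n - 1) div 2"
  have A: "is_ldba (Am m)" by (rule is_ldba_Am)
  have cs: "card (lstates (Am m)) = n" using n by (simp add: Am_def m_def)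
  interpret setting "T (Am m)" m
    using assms A n by unfold_locales (auto simp: m_def)
  have "k ^ k \<le> fact (2 * k)" by (rule kk_fact)
  also have "\<dots> \<le> fact m" by (rule fact_mono) (simp add: k_def m_def)
  also have "\<dots> \<le> card (dstates (T (Am m)))" by (rule bound)
  finally have "real (k ^ k) \<le> real (card (dstates (T (Am m))))" by linarith
  moreover have "2 powr (1/8 * real n * log 2 (real n)) \<le> real (k ^ k)"
    using real_bound[OF n k_def] .
  ultimately have "2 powr (1/8 * real n * log 2 (real n)) \<le> real (card (dstates (T (Am m))))"
    by (rule order.trans[rotated])
  thus "\<exists>A. is_ldba A \<and> card (lstates A) = n \<and>
           real (card (dstates (T A))) \<ge> 2 powr (1/8 * real n * log 2 (real n))"
    using A cs by blast
qed


end
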